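(* If $R$ is a von Neumann regular, locally finite dimensional $K$-algebra, then $R$ is locally unit-regular.
   Context: $K$ is a field; algebras are associative, not necessarily unital. A ring $R$ is regular if for each $x\in R$ there is $y$ with $xyx=x$. A $K$-algebra is locally finite dimensional if every finite subset is contained in a finite dimensional subalgebra. A unital ring $S$ is unit-regular if for each $x\in S$ there is a unit $u$ of $S$ with $xux = x$. A $K$-algebra $R$ is locally unit-regular if every finite subset of $R$ is contained in a $K$-subalgebra of $R$ that has its own identity element and is unit-regular. *)

theory Defs
  imports Complex_Main
begin

text \<open>A (possibly non-unital) associative algebra over a field K: the carrier is a type of
class ring (associative, not necessarily unital), with a K-vector space structure
given by scale, compatible with the multiplication.\<close>

definition is_algebra :: "('k::field \<Rightarrow> 'r::ring \<Rightarrow> 'r) \<Rightarrow> bool" where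
  "is_algebra scale \<longleftrightarrow> vector_space scale \<and>
     (\<forall>a x y. scale a (x * y) = scale a x * y \<and> scale a (x * y) = x * scale a y)"

definition is_subalgebra :: "('k::field \<Rightarrow> 'r::ring \<Rightarrow> 'r) \<Rightarrow> 'r set \<Rightarrow> bool" where
  "is_subalgebra scale S \<longleftrightarrow> module.subspace scale S \<and> (\<forall>x\<in>S. \<forall>y\<in>S. x * y \<in> S)"

definition regular_ring :: "'r::ring itself \<Rightarrow> bool" where
  "regular_ring _ \<longleftrightarrow> (\<forall>x::'r. \<exists>y. x * y * x = x)"

definition locally_finite_dimensional :: "('k::field \<Rightarrow> 'r::ring \<Rightarrow> 'r) \<Rightarrow> bool" where
  "locally_finite_dimensional scale \<longleftrightarrow>
     (\<forall>F. finite F \<longrightarrow> (\<exists>S. is_subalgebra scale S \<and> F \<subseteq> S \<and>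
        (\<exists>B. finite B \<and> S = module.span scale B)))"

definition is_identity_of :: "'r::ring \<Rightarrow> 'r set \<Rightarrow> bool" where
  "is_identity_of e S \<longleftrightarrow> e \<in> S \<and> (\<forall>s\<in>S. e * s = s \<and> s * e = s)"

definition unit_regular_on :: "'r::ring set \<Rightarrow> 'r \<Rightarrow> bool" where
  "unit_regular_on S e \<longleftrightarrow>
     (\<forall>x\<in>S. \<exists>u\<in>S. (\<exists>v\<in>S. u * v = e \<and> v * u = e) \<and> x * u * x = x)"

definition locally_unit_regular :: "('k::field \<Rightarrow> 'r::ring \<Rightarrow> 'r) \<Rightarrow> bool" where
  "locally_unit_regular scale \<longleftrightarrow>
     (\<forall>F. finite F \<longrightarrow> (\<exists>S e. is_subalgebra scale S \<and> F \<subseteq> S \<and>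
        is_identity_of e S \<and> unit_regular_on S e))"

end

theory Submission
  imports Defs
begin


lemma ar: "(a::'r::ring) * b = c \<Longrightarrow> a * (b * z) = c * z"
  by (simp add: mult.assoc[symmetric])

definition iso :: "'r::ring \<Rightarrow> 'r \<Rightarrow> bool" where
  "iso P Q \<longleftrightarrow> (\<exists>a b. Q * a = a \<and> a * P = a \<and> P * b = b \<and> b * Q = b \<and> b * a = P \<and> a * b = Q)"

lemma iso_I: "Q * a = a \<Longrightarrow> a * P = a \<Longrightarrow> P * b = b \<Longrightarrow> b * Q = b \<Longrightarrow> b * a = P \<Longrightarrow> a * b = Q \<Longrightarrow> iso P Q"
  unfolding iso_def by blast

lemma iso_refl: "P * P = P \<Longrightarrow> iso P P"
  by (rule iso_I[of P P P P]) simp_all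

lemma iso_sym: "iso P Q \<Longrightarrow> iso Q P"
  unfolding iso_def by blast

lemma iso_trans: assumes "iso P Q" "iso Q T" shows "iso P T"
proof -
  obtain a b where ab: "Q * a = a" "a * P = a" "P * b = b" "b * Q = b" "b * a = P" "a * b = Q"
    using assms(1) unfolding iso_def by blast
  obtain c d where cd: "T * c = c" "c * Q = c" "Q * d = d" "d * T = d" "d * c = Q" "c * d = T"
    using assms(2) unfolding iso_def by blast
  show ?thesis
    apply (rule iso_I[of T "c * a" P "b * d"])
    apply (simp_all add: mult.assoc[symmetric] ab cd)
    apply (simp_all add: mult.assoc ab cd ab[THEN ar] cd[THEN ar])
    done
qed

lemma iso_same_ideal: "P * P = P \<Longrightarrow> Q * Q = Q \<Longrightarrow> P * Q = Q \<Longrightarrow> Q * P = P \<Longrightarrow> iso P Q"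
  by (rule iso_I[of Q P P Q]) simp_all

lemma zl: "(a::'r::ring) * P = a \<Longrightarrow> P * Q = 0 \<Longrightarrow> a * Q = 0"
proof -
  assume h: "a * P = a" "P * Q = 0"
  have "a * Q = (a * P) * Q" using h by simp
  also have "\<dots> = 0" by (simp add: mult.assoc h(2))
  finally show ?thesis .
qed

lemma zr: "P * (a::'r::ring) = a \<Longrightarrow> Q * P = 0 \<Longrightarrow> Q * a = 0"
proof -
  assume h: "P * a = a" "Q * P = 0"
  have "Q * a = Q * (P * a)" using h by simp
  also have "\<dots> = 0" by (simp add: mult.assoc[symmetric] h(2))
  finally show ?thesis .
qed

lemma iso_add:
  assumes "iso P1 Q1" "iso P2 Q2" "P1 * P2 = 0" "P2 * P1 = 0" "Q1 * Q2 = 0" "Q2 * Q1 = 0"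
  shows "iso (P1 + P2) (Q1 + Q2)"
proof -
  obtain a1 b1 where 1: "Q1 * a1 = a1" "a1 * P1 = a1" "P1 * b1 = b1" "b1 * Q1 = b1" "b1 * a1 = P1" "a1 * b1 = Q1"
    using assms(1) unfolding iso_def by blast
  obtain a2 b2 where 2: "Q2 * a2 = a2" "a2 * P2 = a2" "P2 * b2 = b2" "b2 * Q2 = b2" "b2 * a2 = P2" "a2 * b2 = Q2"
    using assms(2) unfolding iso_def by blast
  note x1 = zl[OF 1(2) assms(3)] and x2 = zl[OF 2(2) assms(4)]
  note x3 = zl[OF 1(4) assms(5)] and x4 = zl[OF 2(4) assms(6)]
  note y1 = zr[OF 1(1) assms(6)] and y2 = zr[OF 2(1) assms(5)]
  note y3 = zr[OF 1(3) assms(4)] and y4 = zr[OF 2(3) assms(3)]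
  note z1 = zr[OF 2(1) x3] and z2 = zr[OF 1(1) x4]
  note z3 = zr[OF 2(3) x1] and z4 = zr[OF 1(3) x2]
  show ?thesis
    apply (rule iso_I[of _ "a1 + a2" _ "b1 + b2"])
    apply (simp_all add: ring_distribs 1 2 x1 x2 x3 x4 y1 y2 y3 y4 z1 z2 z3 z4)
    done
qed


lemma injsurj:
  fixes P :: "'r::ring"
  assumes reg: "\<And>x::'r. \<exists>y. x * y * x = x"
    and PP: "P * P = P" and QQ: "Q * Q = Q" and Qw: "Q * w = w" and wP: "w * P = w"
    and inj: "\<And>a. w * a = 0 \<Longrightarrow> P * a = 0"
    and surj: "Q = w * c"
  shows "iso P Q"
proof -
  obtain z where z: "w * z * w = w" using reg by blast
  define w' where "w' = P * z * Q"
  have 1: "w * w' = Q"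
  proof -
    have "w * w' = (w * P) * z * Q" unfolding w'_def by (simp add: mult.assoc)
    also have "\<dots> = w * z * Q" using wP by simp
    also have "\<dots> = w * z * w * c" using surj by (simp add: mult.assoc)
    also have "\<dots> = Q" using z surj by simp
    finally show ?thesis .
  qed
  have "w * (P - P * z * w) = 0"
    using z wP by (simp add: right_diff_distrib mult.assoc[symmetric])
  hence "P * (P - P * z * w) = 0" by (rule inj)
  hence 2: "P * z * w = P" using PP by (simp add: right_diff_distrib mult.assoc[symmetric])
  have 3: "w' * w = P"
    unfolding w'_def using Qw 2 by (simp add: mult.assoc)
  show ?thesis
    apply (rule iso_I[of Q w P w'])
    using Qw wP 1 3 PP QQ by (simp_all add: w'_def mult.assoc PP[THEN ar] QQ[THEN ar])
qed

lemma ur_from_iso: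
  fixes p :: "'r::ring"
  assumes pp: "p * p = p" and pn: "p * n = n" and np: "n * p = n" and py: "p * y = y" and yp: "y * p = y"
    and nyn: "n * y * n = n" and yny: "y * n * y = y"
    and I: "iso (p - y * n) (p - n * y)"
  shows "\<exists>u v. p * u * p = u \<and> p * v * p = v \<and> u * v = p \<and> v * u = p \<and> n * u * n = n"
proof -
  obtain a b where ab: "(p - n * y) * a = a" "a * (p - y * n) = a" "(p - y * n) * b = b"
     "b * (p - n * y) = b" "b * a = p - y * n" "a * b = p - n * y"
    using I unfolding iso_def by blast
  have nyn': "n * (y * n) = n" and yny': "y * (n * y) = y" using nyn yny by (simp_all add: mult.assoc)
  have pa: "p * a = a"
  proof -
    have "p * a = p * ((p - n * y) * a)" using ab(1) by simp
    also have "\<dots> = (p - n * y) * a" by (simp add: mult.assoc[symmetric] right_diff_distrib pp pn)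
    finally show ?thesis using ab(1) by simp
  qed
  have ap: "a * p = a"
  proof -
    have "a * p = (a * (p - y * n)) * p" using ab(2) by simp
    also have "\<dots> = a * (p - y * n)" by (simp add: mult.assoc left_diff_distrib pp yp np)
    finally show ?thesis using ab(2) by simp
  qed
  have pb: "p * b = b"
  proof -
    have "p * b = p * ((p - y * n) * b)" using ab(3) by simp
    also have "\<dots> = (p - y * n) * b" by (simp add: mult.assoc[symmetric] right_diff_distrib pp py)
    finally show ?thesis using ab(3) by simp
  qed
  have bp: "b * p = b"
  proof -
    have "b * p = (b * (p - n * y)) * p" using ab(4) by simp
    also have "\<dots> = b * (p - n * y)" by (simp add: mult.assoc left_diff_distrib pp np yp)
    finally show ?thesis using ab(4) by simp
  qed
  have ya: "y * a = 0"
  proof -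
    have "y * a = y * ((p - n * y) * a)" using ab by simp
    also have "\<dots> = 0" by (simp add: mult.assoc[symmetric] right_diff_distrib yp) (simp add: mult.assoc yny')
    finally show ?thesis .
  qed
  have bn: "b * n = 0"
  proof -
    have "b * n = (b * (p - n * y)) * n" using ab by simp
    also have "\<dots> = 0" by (simp add: mult.assoc left_diff_distrib pn nyn')
    finally show ?thesis .
  qed
  have nb: "n * b = 0"
  proof -
    have "n * b = n * ((p - y * n) * b)" using ab by simp
    also have "\<dots> = 0" by (simp add: mult.assoc[symmetric] right_diff_distrib np) (simp add: mult.assoc nyn')
    finally show ?thesis .
  qed
  have an: "a * y = 0"
  proof -
    have "a * y = (a * (p - y * n)) * y" using ab by simp
    also have "\<dots> = 0" by (simp add: mult.assoc left_diff_distrib py yny')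
    finally show ?thesis .
  qed
  show ?thesis
  proof (intro exI conjI)
    show "p * (y + b) * p = y + b" by (simp add: ring_distribs mult.assoc py yp pb bp py[THEN ar] pb[THEN ar])
    show "p * (n + a) * p = n + a" by (simp add: ring_distribs mult.assoc pn np pa ap pn[THEN ar] pa[THEN ar])
    show "(y + b) * (n + a) = p"
      using ab(5) by (simp add: ring_distribs ya bn algebra_simps)
    show "(n + a) * (y + b) = p"
      using ab(6) by (simp add: ring_distribs nb an algebra_simps)
    show "n * (y + b) * n = n" by (simp add: ring_distribs nyn nb)
  qed
qed

fun cpow :: "'r::ring \<Rightarrow> 'r \<Rightarrow> nat \<Rightarrow> 'r" where
  "cpow p x 0 = p"
| "cpow p x (Suc k) = x * cpow p x k"

lemma cpow_left: "p * x = x \<Longrightarrow> p * p = p \<Longrightarrow> p * cpow p x k = cpow p x k"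
  by (cases k) (simp_all add: mult.assoc[symmetric])

lemma cpow_right: "x * p = x \<Longrightarrow> p * p = p \<Longrightarrow> cpow p x k * p = cpow p x k"
  by (induction k) (simp_all add: mult.assoc)

lemma cpow_add: "p * x = x \<Longrightarrow> p * p = p \<Longrightarrow> cpow p x (i + j) = cpow p x i * cpow p x j"
  by (induction i) (simp_all add: mult.assoc cpow_left)

lemma cpow_comm: "x * s = s * x \<Longrightarrow> p * s = s \<Longrightarrow> s * p = s \<Longrightarrow> cpow p x k * s = s * cpow p x k"
proof (induction k)
  case 0 then show ?case by simp
next
  case (Suc k)
  have "x * (s * cpow p x k) = (x * s) * cpow p x k" by (simp add: mult.assoc)
  also have "\<dots> = s * (x * cpow p x k)" using Suc by (simp add: mult.assoc)
  finally show ?case using Suc by (simp add: mult.assoc)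
qed


lemma arr: "(a::'r::ring) * (b * c) = d \<Longrightarrow> a * (b * (c * z)) = d * z"
  by (simp add: mult.assoc[symmetric])

lemma cpow_corner:
  assumes "e * e = e" "e * n = n" "p * e = e" "e * p = e"
  shows "cpow e (n * e) j = cpow p n j * e"
proof (induction j)
  case 0 then show ?case using assms by simp
next
  case (Suc j)
  have "e * cpow p n j * e = cpow p n j * e"
    using assms by (cases j) (simp_all add: mult.assoc[symmetric])
  then show ?case using Suc by (simp add: mult.assoc)
qed

lemma nil_iso:
  fixes p :: "'r::ring"
  assumes reg: "\<And>x::'r. \<exists>y. x * y * x = x"
  shows "p * p = p \<Longrightarrow> p * n = n \<Longrightarrow> n * p = n \<Longrightarrow> p * y = y \<Longrightarrow> y * p = y \<Longrightarrow>
     n * (y * n) = n \<Longrightarrow> cpow p n m = 0 \<Longrightarrow> iso (p - y * n) (p - n * y)"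
proof (induction m arbitrary: p n y)
  case 0
  then have "p = 0" by simp
  then have "y = 0" "n = 0" using 0 by (metis mult_zero_left)+
  then show ?case using \<open>p = 0\<close> by (simp add: iso_refl)
next
  case (Suc m)
  note pp = Suc.prems(1) and pn = Suc.prems(2) and np = Suc.prems(3) and py = Suc.prems(4)
    and yp = Suc.prems(5) and nyn = Suc.prems(6)
  have nil: "n * cpow p n m = 0" using Suc.prems(7) by simp
  have nyn': "n * (y * (n * t)) = n * t" for t using nyn by (simp add: mult.assoc[symmetric])
  define e where "e = n * y"
  define f where "f = y * n"
  have en: "e * n = n" unfolding e_def using nyn by (simp add: mult.assoc)
  have nf: "n * f = n" unfolding f_def using nyn by simp
  have ee: "e * e = e" unfolding e_def by (simp add: mult.assoc nyn nyn')
  have ff: "f * f = f" unfolding f_def by (simp add: mult.assoc nyn)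
  have pe: "p * e = e" unfolding e_def using pn by (simp add: mult.assoc[symmetric])
  have ep: "e * p = e" unfolding e_def using yp by (simp add: mult.assoc)
  have pf: "p * f = f" unfolding f_def using py by (simp add: mult.assoc[symmetric])
  have fp: "f * p = f" unfolding f_def using np by (simp add: mult.assoc)
  note B = pp pn np py yp en nf ee ff pe ep pf fp
  note Bar = B[THEN ar]
  define n1 where "n1 = n * e"
  have en1: "e * n1 = n1" unfolding n1_def by (simp add: Bar)
  have n1e: "n1 * e = n1" unfolding n1_def by (simp add: mult.assoc ee)
  obtain z where z: "n1 * z * n1 = n1" using reg by blast
  define y1 where "y1 = e * (z * e)"
  have ey1: "e * y1 = y1" unfolding y1_def by (simp add: Bar)
  have y1e: "y1 * e = y1" unfolding y1_def by (simp add: mult.assoc ee)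
  have n1y1n1: "n1 * (y1 * n1) = n1" unfolding y1_def
    by (simp add: mult.assoc en1 n1e[THEN ar]) (simp add: z[simplified mult.assoc])
  have nil1: "cpow e n1 m = 0"
  proof -
    have "cpow e n1 m = cpow p n m * e" unfolding n1_def by (rule cpow_corner[OF ee en pe ep])
    also have "\<dots> = (cpow p n m * n) * y" unfolding e_def by (simp add: mult.assoc)
    also have "cpow p n m * n = n * cpow p n m" by (rule cpow_comm[OF refl pn np])
    finally show ?thesis using nil by simp
  qed
  have IH: "iso (e - y1 * n1) (e - n1 * y1)"
    by (rule Suc.IH[OF ee en1 n1e ey1 y1e n1y1n1 nil1])
  define f1 where "f1 = y1 * n1"
  define e1 where "e1 = n1 * y1"
  have ny1: "n * y1 = e1" unfolding e1_def n1_def using ey1 by (metis mult.assoc)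
  have nf1: "n * f1 = n1" unfolding f1_def by (simp add: mult.assoc[symmetric] ny1) (simp add: e1_def mult.assoc n1y1n1)
  have ef1: "e * f1 = f1" unfolding f1_def by (simp add: ey1[THEN ar])
  have f1e: "f1 * e = f1" unfolding f1_def by (simp add: mult.assoc n1e)
  have f1f1: "f1 * f1 = f1" unfolding f1_def by (simp add: mult.assoc n1y1n1)
  have ee1: "e * e1 = e1" unfolding e1_def by (simp add: en1[THEN ar])
  have e1e: "e1 * e = e1" unfolding e1_def by (simp add: mult.assoc y1e)
  have e1e1: "e1 * e1 = e1" unfolding e1_def by (simp add: mult.assoc n1y1n1[THEN arr])
  have e1n1: "e1 * n1 = n1" unfolding e1_def by (simp add: mult.assoc n1y1n1)
  note C = B en1 n1e ey1 y1e n1y1n1 ny1 nf1 ef1 f1e f1f1 ee1 e1e e1e1 e1n1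
  note Car = C[THEN ar]
  define h where "h = e - f1"
  have nh: "n * h = 0" unfolding h_def by (simp add: right_diff_distrib nf1 n1_def)
  have eh: "e * h = h" unfolding h_def by (simp add: right_diff_distrib ee ef1)
  have he: "h * e = h" unfolding h_def by (simp add: left_diff_distrib ee f1e)
  have hh: "h * h = h" unfolding h_def by (simp add: ring_distribs ee ef1 f1e f1f1)
  have fh: "f * h = 0" unfolding f_def by (simp add: mult.assoc nh)
  have ph: "p * h = h" using eh pe by (metis mult.assoc)
  define q where "q = p - f"
  have qq: "q * q = q" unfolding q_def by (simp add: ring_distribs pp pf fp ff)
  have pq: "p * q = q" unfolding q_def by (simp add: ring_distribs pp pf)
  have qp: "q * p = q" unfolding q_def by (simp add: ring_distribs pp fp)
  have nq: "n * q = 0" unfolding q_def by (simp add: ring_distribs np nf)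
  have qh: "q * h = h" unfolding q_def by (simp add: ring_distribs ph fh)
  define hq where "hq = h * q"
  note D = C nh eh he hh fh ph qq pq qp nq qh
  note Dar = D[THEN ar]
  have hqhq: "hq * hq = hq" unfolding hq_def by (simp add: mult.assoc Dar)
  have h_hq: "h * hq = hq" unfolding hq_def by (simp add: Dar)
  have hq_h: "hq * h = h" unfolding hq_def by (simp add: mult.assoc qh hh)
  have q_hq: "q * hq = hq" unfolding hq_def by (simp add: Dar)
  have hq_q: "hq * q = hq" unfolding hq_def by (simp add: mult.assoc qq)
  have p_hq: "p * hq = hq" unfolding hq_def by (simp add: Dar)
  have n_hq: "n * hq = 0" unfolding hq_def by (simp add: Dar)
  have Z_hq: "z' * h = 0 \<Longrightarrow> z' * hq = 0" for z' unfolding hq_def by (simp add: mult.assoc[symmetric])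
  define X where "X = q - hq"
  have XX: "X * X = X" unfolding X_def by (simp add: ring_distribs qq q_hq hq_q hqhq)
  have qX: "q * X = X" unfolding X_def by (simp add: ring_distribs qq q_hq)
  have Xq: "X * q = X" unfolding X_def by (simp add: ring_distribs qq hq_q)
  have hqX: "hq * X = 0" unfolding X_def by (simp add: ring_distribs hq_q hqhq)
  have Xhq: "X * hq = 0" unfolding X_def by (simp add: ring_distribs q_hq hqhq)
  have nX: "n * X = 0" unfolding X_def by (simp add: ring_distribs nq n_hq)
  have Xh: "X * h = 0" unfolding X_def by (simp add: ring_distribs qh hq_h)
  have pX: "p * X = X" unfolding X_def by (simp add: ring_distribs pq p_hq)
  define r where "r = p - e"
  have rr: "r * r = r" unfolding r_def by (simp add: ring_distribs pp pe ep ee)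
  have pr: "p * r = r" unfolding r_def by (simp add: ring_distribs pp pe)
  have rp: "r * p = r" unfolding r_def by (simp add: ring_distribs pp ep)
  have re: "r * e = 0" unfolding r_def by (simp add: ring_distribs pe ee)
  have er: "e * r = 0" unfolding r_def by (simp add: ring_distribs ep ee)
  define w where "w = r * X"
  have rw: "r * w = w" unfolding w_def by (simp add: rr[THEN ar])
  have wX: "w * X = w" unfolding w_def by (simp add: mult.assoc XX)
  have ew: "e * w = 0" unfolding w_def by (simp add: er[THEN ar])
  have pw: "p * w = w" unfolding w_def by (simp add: pr[THEN ar])
  have inj_w: "X * a = 0" if wa: "w * a = 0" for a
  proof -
    define b where "b = X * a"
    have rb: "r * b = 0" unfolding b_def using wa by (simp add: w_def mult.assoc)
    have pb: "p * b = b" unfolding b_def by (simp add: pX[THEN ar])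
    have eb: "e * b = b" using rb pb unfolding r_def by (simp add: left_diff_distrib)
    have nb: "n * b = 0" unfolding b_def by (simp add: nX[THEN ar])
    have f1b: "f1 * b = 0" unfolding f1_def n1_def using eb nb by (simp add: mult.assoc)
    have hb: "h * b = b" unfolding h_def using eb f1b by (simp add: left_diff_distrib)
    have "b = X * b" unfolding b_def by (simp add: XX[THEN ar])
    also have "\<dots> = X * (h * b)" using hb by simp
    also have "\<dots> = 0" by (simp add: Xh[THEN ar])
    finally show ?thesis unfolding b_def .
  qed
  obtain z2 where z2: "w * z2 * w = w" using reg by blast
  have z2': "w * (z2 * (w * t)) = w * t" for t using z2 by (simp add: mult.assoc[symmetric])
  define Y where "Y = w * (z2 * r)"
  have YY: "Y * Y = Y" unfolding Y_def by (simp add: mult.assoc rw[THEN ar] z2')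
  have rY: "r * Y = Y" unfolding Y_def by (simp add: rw[THEN ar])
  have Yr: "Y * r = Y" unfolding Y_def by (simp add: mult.assoc rr)
  have Yw: "Y * w = w" unfolding Y_def by (simp add: mult.assoc rw z2[simplified mult.assoc])
  have Ye: "Y * e = 0" unfolding Y_def by (simp add: mult.assoc re)
  have eY: "e * Y = 0" unfolding Y_def by (simp add: ew[THEN ar])
  have pY: "p * Y = Y" unfolding Y_def by (simp add: pw[THEN ar])
  have Yp: "Y * p = Y" unfolding Y_def by (simp add: mult.assoc rp)
  have isoXY: "iso X Y"
    by (rule injsurj[OF reg XX YY Yw wX inj_w Y_def])
  define Z where "Z = r - Y"
  have ZZ: "Z * Z = Z" unfolding Z_def by (simp add: ring_distribs rr rY Yr YY)
  have ZY: "Z * Y = 0" unfolding Z_def by (simp add: ring_distribs rY YY)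
  have YZ: "Y * Z = 0" unfolding Z_def by (simp add: ring_distribs Yr YY)
  have Ze: "Z * e = 0" unfolding Z_def by (simp add: ring_distribs re Ye)
  have Zw: "Z * w = 0" unfolding Z_def by (simp add: ring_distribs rw Yw)
  have pZ: "p * Z = Z" unfolding Z_def by (simp add: ring_distribs pr pY)
  have ZX: "Z * X = 0"
  proof -
    have "X = e * X + r * X" unfolding r_def by (simp add: ring_distribs pX)
    hence "Z * X = Z * (e * X) + Z * (r * X)" by (metis distrib_left)
    also have "\<dots> = 0" by (simp add: Ze[THEN ar] Zw[unfolded w_def])
    finally show ?thesis .
  qed
  have Zh: "Z * h = 0" using Ze eh by (metis mult.assoc mult_zero_left)
  have Zq: "Z * q = 0"
  proof -
    have "q = hq + X" unfolding X_def by simp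
    hence "Z * q = Z * hq + Z * X" by (metis distrib_left)
    thus ?thesis using Z_hq[OF Zh] ZX by simp
  qed
  define c where "c = e - e1"
  have cc: "c * c = c" unfolding c_def by (simp add: ring_distribs ee ee1 e1e e1e1)
  have ce: "c * e = c" unfolding c_def by (simp add: ring_distribs ee e1e)
  have cne: "c * (n * e) = 0" unfolding c_def
    by (simp add: left_diff_distrib n1_def[symmetric] en1 e1n1)
  have cnX: "c * (n * X) = 0" by (simp add: nX)
  have cnw: "c * (n * w) = 0"
  proof -
    have "n * w = n * X - n * (e * X)" unfolding w_def r_def by (simp add: ring_distribs mult.assoc[symmetric] np)
    thus ?thesis by (simp add: right_diff_distrib nX cne[THEN arr])
  qed
  have cnY: "c * (n * Y) = 0" unfolding Y_def by (simp add: cnw[simplified mult.assoc[symmetric], THEN ar, simplified mult.assoc])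
  define w2 where "w2 = c * (n * Z)"
  have cw2: "c * w2 = w2" unfolding w2_def by (simp add: cc[THEN ar])
  have w2Z: "w2 * Z = w2" unfolding w2_def by (simp add: mult.assoc ZZ)
  have surj2: "c = w2 * y"
  proof -
    have "w2 * y = c * (n * y) - c * (n * (e * y)) - c * (n * (Y * y))"
      unfolding w2_def Z_def r_def by (simp add: ring_distribs mult.assoc np py)
    also have "\<dots> = c" using ce cne cnY unfolding e_def
      by (simp add: mult.assoc[symmetric])
    finally show ?thesis by simp
  qed
  have inj2: "Z * a = 0" if wa: "w2 * a = 0" for a
  proof -
    define b where "b = Z * a"
    have cnb: "c * (n * b) = 0" using wa unfolding b_def w2_def by (simp add: mult.assoc)
    have "c * (n * b) = n * b - n * (y1 * (n * b))" unfolding c_def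
      by (simp add: left_diff_distrib en[THEN ar]) (simp add: ny1[symmetric] mult.assoc)
    hence nb: "n * b = n * (y1 * (n * b))" using cnb by simp
    define t where "t = y1 * (n * b)"
    have nbt: "n * (b - t) = 0" using nb unfolding t_def by (simp add: right_diff_distrib)
    have fbt: "f * (b - t) = 0" unfolding f_def by (simp add: mult.assoc nbt)
    have pb: "p * b = b" unfolding b_def by (simp add: pZ[THEN ar])
    have py1: "p * y1 = y1" using pe ey1 by (metis mult.assoc)
    have pt: "p * t = t" unfolding t_def by (simp add: py1[THEN ar])
    have fbt': "f * b = f * t" using fbt by (simp add: right_diff_distrib)
    have qbt: "q * (b - t) = b - t" unfolding q_def by (simp add: left_diff_distrib right_diff_distrib pb pt fbt')
    have Zb: "Z * b = b" unfolding b_def by (simp add: ZZ[THEN ar])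
    have Zt: "Z * t = 0" unfolding t_def using Ze ey1 by (metis mult.assoc mult_zero_left)
    have "b = Z * b" using Zb by simp
    also have "\<dots> = Z * t + Z * (q * (b - t))" using qbt by (simp add: right_diff_distrib)
    also have "\<dots> = 0" using Zt Zq by (simp add: mult.assoc[symmetric])
    finally show ?thesis unfolding b_def .
  qed
  have isoZc: "iso Z c" by (rule injsurj[OF reg ZZ cc cw2 w2Z inj2 surj2])
  have isohhq: "iso h hq" by (rule iso_same_ideal[OF hh hqhq h_hq hq_h])
  have isohc: "iso h c" using IH unfolding h_def c_def f1_def e1_def .
  have isohqZ: "iso hq Z" by (rule iso_trans[OF iso_sym[OF isohhq] iso_trans[OF isohc iso_sym[OF isoZc]]])
  have "iso (hq + X) (Z + Y)" by (rule iso_add[OF isohqZ isoXY hqX Xhq ZY YZ])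
  moreover have "hq + X = p - y * n" unfolding X_def q_def f_def by simp
  moreover have "Z + Y = p - n * y" unfolding Z_def r_def e_def by simp
  ultimately show ?case by simp
qed



lemma spi:
  fixes scale :: "'k::field \<Rightarrow> 'r::ring \<Rightarrow> 'r"
    and p x :: 'r
  assumes alg: "is_algebra scale" and lfd: "locally_finite_dimensional scale"
    and pp: "p * p = p" and px: "p * x = x" and xp: "x * p = x"
  shows "\<exists>k s. p * s = s \<and> s * p = s \<and> x * s = s * x \<and> cpow p x k = cpow p x (Suc k) * s"
proof -
  have vs: "vector_space scale" using alg unfolding is_algebra_def by blast
  have md: "module scale" using vs by (simp add: module_iff_vector_space)
  have sc: "scale a (u * v) = u * scale a v" for a u v using alg unfolding is_algebra_def by blast
  have sc2: "scale a (u * v) = scale a u * v" for a u v using alg unfolding is_algebra_def by blast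
  obtain S B where S: "is_subalgebra scale S" "{p, x} \<subseteq> S" "finite B" "S = module.span scale B"
    using lfd unfolding locally_finite_dimensional_def by (metis finite.emptyI finite_insert)
  have mul: "u \<in> S \<Longrightarrow> v \<in> S \<Longrightarrow> u * v \<in> S" for u v using S(1) unfolding is_subalgebra_def by blast
  have powS: "cpow p x j \<in> S" for j
    by (induction j) (use S(2) mul in auto)
  define N where "N = card B"
  define I where "I j = cpow p x ` {j..N}" for j
  have ex: "\<exists>j\<le>N. cpow p x j \<in> module.span scale (I (Suc j))"
  proof (rule ccontr)
    assume H: "\<not> ?thesis"
    have step: "\<not> module.dependent scale (I (N + 1 - d)) \<and> card (I (N + 1 - d)) = d" if "d \<le> N + 1" for d
      using that
    proof (induction d)
      case 0 then show ?case by (simp add: I_def module.independent_empty[OF md])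
    next
      case (Suc d)
      define j where "j = N - d"
      have jN: "j \<le> N" and j1: "N + 1 - d = Suc j" and j2: "N + 1 - Suc d = j" using Suc.prems unfolding j_def by auto
      have ins: "I j = insert (cpow p x j) (I (Suc j))" unfolding I_def using jN
        by (simp add: atLeastAtMost_insertL[symmetric])
      have notin: "cpow p x j \<notin> module.span scale (I (Suc j))" using H jN by blast
      have notin2: "cpow p x j \<notin> I (Suc j)"
        using notin module.span_base[OF md] by blast
      have fin: "finite (I (Suc j))" unfolding I_def by simp
      from Suc.IH Suc.prems have IH: "\<not> module.dependent scale (I (Suc j)) \<and> card (I (Suc j)) = d"
        using j1 by simp
      show ?case unfolding j2 ins
        using vector_space.independent_insertI[OF vs notin] IH notin2 fin by simp
    qed
    from step[of "N + 1"] have ind: "\<not> module.dependent scale (I 0)" and cI: "card (I 0) = N + 1" by simp_all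
    have sub: "I 0 \<subseteq> module.span scale B" using powS S(4) unfolding I_def by blast
    from vector_space.independent_span_bound[OF vs S(3) ind sub] cI show False unfolding N_def by simp
  qed
  then obtain j where jN: "j \<le> N" and jsp: "cpow p x j \<in> module.span scale (I (Suc j))" by blast
  define T where "T = {v. \<exists>s. v = cpow p x (Suc j) * s \<and> p * s = s \<and> s * p = s \<and> x * s = s * x}"
  have subT: "module.subspace scale T"
    unfolding module.subspace_def[OF md]
  proof (intro conjI ballI allI)
    show "0 \<in> T" unfolding T_def by (rule CollectI, rule exI[of _ 0]) simp
  next
    fix u v assume "u \<in> T" "v \<in> T"
    then obtain s1 s2 where "u = cpow p x (Suc j) * s1" "p * s1 = s1" "s1 * p = s1" "x * s1 = s1 * x"
      "v = cpow p x (Suc j) * s2" "p * s2 = s2" "s2 * p = s2" "x * s2 = s2 * x" unfolding T_def by blast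
    then show "u + v \<in> T" unfolding T_def
      by (intro CollectI exI[of _ "s1 + s2"]) (simp add: ring_distribs)
  next
    fix c u assume "u \<in> T"
    then obtain s1 where "u = cpow p x (Suc j) * s1" "p * s1 = s1" "s1 * p = s1" "x * s1 = s1 * x"
      unfolding T_def by blast
    then show "scale c u \<in> T" unfolding T_def
      by (intro CollectI exI[of _ "scale c s1"]) (simp add: sc[symmetric] sc2[symmetric])
  qed
  have genT: "I (Suc j) \<subseteq> T"
  proof
    fix v assume "v \<in> I (Suc j)"
    then obtain i where i: "Suc j \<le> i" "v = cpow p x i" unfolding I_def by auto
    have "v = cpow p x (Suc j) * cpow p x (i - Suc j)" using i cpow_add[OF px pp, of "Suc j" "i - Suc j"] by simp
    moreover have "x * cpow p x (i - Suc j) = cpow p x (i - Suc j) * x"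
      using cpow_comm[OF refl px xp] by simp
    ultimately show "v \<in> T" unfolding T_def
      using cpow_left[OF px pp] cpow_right[OF xp pp] by blast
  qed
  have "module.span scale (I (Suc j)) \<subseteq> T"
    by (rule module.span_minimal[OF md genT subT])
  with jsp obtain s where "cpow p x j = cpow p x (Suc j) * s" "p * s = s" "s * p = s" "x * s = s * x"
    unfolding T_def by blast
  then show ?thesis by blast
qed

lemma corner_l: "(q::'r::ring) * q = q \<Longrightarrow> q * u * q = u \<Longrightarrow> q * u = u"
proof -
  assume a: "q * q = q" "q * u * q = u"
  have "q * u = q * (q * u * q)" using a by simp
  also have "\<dots> = q * u * q" by (simp add: mult.assoc[symmetric] a(1))
  finally show ?thesis using a by simp
qed

lemma corner_r: "(q::'r::ring) * q = q \<Longrightarrow> q * u * q = u \<Longrightarrow> u * q = u"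
proof -
  assume a: "q * q = q" "q * u * q = u"
  have "u * q = (q * u * q) * q" using a by simp
  also have "\<dots> = q * u * q" by (simp add: mult.assoc a(1))
  finally show ?thesis using a by simp
qed

lemma absorb_l: "(p::'r::ring) * q = q \<Longrightarrow> q * u = u \<Longrightarrow> p * u = u"
  by (metis mult.assoc)

lemma absorb_r: "(q::'r::ring) * p = q \<Longrightarrow> u * q = u \<Longrightarrow> u * p = u"
  by (metis mult.assoc)

lemma ur_corner:
  fixes p :: "'r::ring"
  assumes reg: "\<And>x::'r. \<exists>y. x * y * x = x"
    and pp: "p * p = p" and px: "p * x = x" and xp: "x * p = x" and ps: "p * s = s" and sp: "s * p = s"
    and xs: "x * s = s * x" and hk: "cpow p x k = cpow p x (Suc k) * s"
  shows "\<exists>u v. p * u * p = u \<and> p * v * p = v \<and> u * v = p \<and> v * u = p \<and> x * u * x = x"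
proof -
  define X where "X j = cpow p x j" for j
  define S where "S j = cpow p s j" for j
  have Xadd: "X (i + j) = X i * X j" for i j unfolding X_def by (rule cpow_add[OF px pp])
  have pX: "p * X j = X j" for j unfolding X_def by (rule cpow_left[OF px pp])
  have Xp: "X j * p = X j" for j unfolding X_def by (rule cpow_right[OF xp pp])
  have pS: "p * S j = S j" for j unfolding S_def by (rule cpow_left[OF ps pp])
  have Sp: "S j * p = S j" for j unfolding S_def by (rule cpow_right[OF sp pp])
  have Xs: "X j * s = s * X j" for j unfolding X_def by (rule cpow_comm[OF xs ps sp])
  have Xx: "X j * x = x * X j" for j unfolding X_def by (rule cpow_comm[OF refl px xp])
  have SX: "S i * X j = X j * S i" for i j unfolding S_def
    by (rule cpow_comm[OF Xs[symmetric] pX Xp])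
  have Sx: "S i * x = x * S i" for i unfolding S_def by (rule cpow_comm[OF xs[symmetric] px xp])
  have X0: "X 0 = p" and XS: "X (Suc j) = x * X j" and S0: "S 0 = p" and SS: "S (Suc j) = s * S j" for j
    unfolding X_def S_def by simp_all
  have hk': "X k = X (Suc k) * s" using hk unfolding X_def .
  have aux: "X (Suc (k + m)) * s = X (k + m)" for m
  proof -
    have "X (Suc (k + m)) * s = X m * (X (Suc k) * s)" using Xadd[of m "Suc k"] by (simp add: mult.assoc add.commute)
    also have "\<dots> = X (k + m)" using hk' Xadd[of m k] by (simp add: add.commute)
    finally show ?thesis .
  qed
  have claim1: "X k = X (k + m) * S m" for m
  proof (induction m)
    case 0 then show ?case using Sp by (simp add: S0 Xp)
  next
    case (Suc m)
    have "X (k + Suc m) * S (Suc m) = (X (Suc (k + m)) * s) * S m" by (simp add: SS mult.assoc)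
    also have "\<dots> = X k" using aux Suc by simp
    finally show ?case by simp
  qed
  define g where "g = X k * S k"
  have gg: "g * g = g"
  proof -
    have "g * g = X k * (S k * X k) * S k" unfolding g_def by (simp add: mult.assoc)
    also have "\<dots> = X (k + k) * S k * S k" by (simp add: SX Xadd mult.assoc)
    also have "\<dots> = g" unfolding g_def using claim1[of k] by simp
    finally show ?thesis .
  qed
  have gx: "g * x = x * g" unfolding g_def by (simp add: mult.assoc Sx) (simp add: mult.assoc[symmetric] Xx)
  have Ss: "S j * s = s * S j" for j unfolding S_def by (rule cpow_comm[OF refl ps sp])
  have gs: "g * s = s * g" unfolding g_def by (simp add: mult.assoc Ss Xs[THEN ar])
  have XX: "X i * X j = X j * X i" for i j using Xadd[of i j] Xadd[of j i] by (simp add: add.commute)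
  have gX: "g * X j = X j * g" for j
  proof -
    have "g * X j = X k * (X j * S k)" unfolding g_def by (simp add: mult.assoc SX)
    also have "\<dots> = (X k * X j) * S k" by (simp add: mult.assoc)
    also have "\<dots> = X j * g" unfolding g_def by (simp add: XX[of k j] mult.assoc)
    finally show ?thesis .
  qed
  have pg: "p * g = g" unfolding g_def by (simp add: mult.assoc[symmetric] pX)
  have gp: "g * p = g" unfolding g_def by (simp add: mult.assoc Sp)
  define q where "q = p - g"
  have qq: "q * q = q" unfolding q_def by (simp add: ring_distribs pp pg gp gg)
  have pq: "p * q = q" unfolding q_def by (simp add: ring_distribs pp pg)
  have qp: "q * p = q" unfolding q_def by (simp add: ring_distribs pp gp)
  have gq: "g * q = 0" unfolding q_def by (simp add: ring_distribs gp gg)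
  have qg: "q * g = 0" unfolding q_def by (simp add: ring_distribs pg gg)
  have qx: "q * x = x * q" unfolding q_def by (simp add: ring_distribs px xp gx)
  have qs: "q * s = s * q" unfolding q_def by (simp add: ring_distribs ps sp gs)
  have qX: "q * X j = X j * q" for j unfolding q_def by (simp add: ring_distribs pX Xp gX)
  define n where "n = x * q"
  have qn: "q * n = n" unfolding n_def by (simp add: mult.assoc[symmetric] qx) (simp add: mult.assoc qq)
  have nq: "n * q = n" unfolding n_def by (simp add: mult.assoc qq)
  have cpn: "cpow q n j = X j * q" for j
  proof (induction j)
    case 0 then show ?case by (simp add: X0 pq)
  next
    case (Suc j)
    have "cpow q n (Suc j) = x * (q * X j) * q" using Suc by (simp add: n_def mult.assoc)
    also have "\<dots> = X (Suc j) * q" by (simp add: qX XS mult.assoc qq)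
    finally show ?case .
  qed
  have nil: "cpow q n k = 0"
  proof -
    have "cpow q n k = X k * q" by (rule cpn)
    also have "\<dots> = X k - X k * g" by (simp add: q_def right_diff_distrib Xp)
    also have "X k * g = X (k + k) * S k" unfolding g_def by (simp add: Xadd mult.assoc)
    finally show ?thesis using claim1[of k] by simp
  qed
  obtain z where z: "n * z * n = n" using reg by blast
  define y0 where "y0 = q * (z * q)"
  have ny0n: "n * (y0 * n) = n" unfolding y0_def using z by (simp add: mult.assoc nq[THEN ar] qn)
  have ny0n': "n * (y0 * (n * t)) = n * t" for t using ny0n by (simp add: mult.assoc[symmetric])
  define y where "y = y0 * (n * y0)"
  have qy0: "q * y0 = y0" unfolding y0_def by (simp add: qq[THEN ar])
  have y0q: "y0 * q = y0" unfolding y0_def by (simp add: mult.assoc qq)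
  have qy: "q * y = y" unfolding y_def by (simp add: qy0[THEN ar])
  have yq: "y * q = y" unfolding y_def by (simp add: mult.assoc y0q)
  have nyn: "n * (y * n) = n" unfolding y_def by (simp add: mult.assoc ny0n' ny0n)
  have yny: "y * n * y = y" unfolding y_def by (simp add: mult.assoc ny0n' ny0n)
  have I: "iso (q - y * n) (q - n * y)"
    by (rule nil_iso[OF reg qq qn nq qy yq nyn nil])
  obtain u2 v2 where uv: "q * u2 * q = u2" "q * v2 * q = v2" "u2 * v2 = q" "v2 * u2 = q" "n * u2 * n = n"
    using ur_from_iso[OF qq qn nq qy yq nyn[simplified mult.assoc[symmetric]] yny I] by blast
  have qu2: "q * u2 = u2" by (rule corner_l[OF qq uv(1)])
  have u2q: "u2 * q = u2" by (rule corner_r[OF qq uv(1)])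
  have qv2: "q * v2 = v2" by (rule corner_l[OF qq uv(2)])
  have v2q: "v2 * q = v2" by (rule corner_r[OF qq uv(2)])
  have gu2: "g * u2 = 0" by (rule zr[OF qu2 gq])
  have u2g: "u2 * g = 0" by (rule zl[OF u2q qg])
  have gv2: "g * v2 = 0" by (rule zr[OF qv2 gq])
  have v2g: "v2 * g = 0" by (rule zl[OF v2q qg])
  have xsg: "x * (s * g) = g"
  proof -
    have "x * (s * g) = (x * X k) * (s * S k)" unfolding g_def by (simp add: mult.assoc Xs[THEN ar])
    also have "\<dots> = (X (Suc k) * s) * S k" by (simp add: XS mult.assoc)
    also have "\<dots> = g" using hk' g_def by simp
    finally show ?thesis .
  qed
  have sxg: "s * (x * g) = g" using xsg xs by (simp add: mult.assoc[symmetric])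
  have gpq: "g + q = p" unfolding q_def by simp
  show ?thesis
  proof (intro exI conjI)
    have pu2: "p * u2 = u2" by (rule absorb_l[OF pq qu2])
    have u2p: "u2 * p = u2" by (rule absorb_r[OF qp u2q])
    have pv2: "p * v2 = v2" by (rule absorb_l[OF pq qv2])
    have v2p: "v2 * p = v2" by (rule absorb_r[OF qp v2q])
    show "p * (s * g + u2) * p = s * g + u2"
      by (simp add: ring_distribs mult.assoc gp pu2 u2p) (simp add: mult.assoc[symmetric] ps)
    show "p * (x * g + v2) * p = x * g + v2"
      by (simp add: ring_distribs mult.assoc gp pv2 v2p) (simp add: mult.assoc[symmetric] px)
    have e1: "s * (g * (x * g)) = g"
    proof -
      have "s * (g * (x * g)) = s * ((x * g) * g)" using gx by (simp add: mult.assoc[symmetric])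
      also have "\<dots> = s * (x * g)" by (simp add: mult.assoc gg)
      finally show ?thesis using sxg by simp
    qed
    have e2: "u2 * (x * g) = 0"
    proof -
      have "u2 * (x * g) = (u2 * g) * x" using gx by (simp add: mult.assoc)
      thus ?thesis using u2g by simp
    qed
    have "(s * g + u2) * (x * g + v2) = s * (g * (x * g)) + s * (g * v2) + u2 * (x * g) + u2 * v2"
      by (simp add: ring_distribs mult.assoc)
    also have "\<dots> = g + q" by (simp add: e1 e2 gv2 uv(3))
    finally show "(s * g + u2) * (x * g + v2) = p" using gpq by simp
    have e3: "x * (g * (s * g)) = g"
    proof -
      have "x * (g * (s * g)) = x * ((s * g) * g)" using gs by (simp add: mult.assoc[symmetric])
      also have "\<dots> = x * (s * g)" by (simp add: mult.assoc gg)
      finally show ?thesis using xsg by simp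
    qed
    have e4: "v2 * (s * g) = 0"
    proof -
      have "v2 * (s * g) = (v2 * g) * s" using gs by (simp add: mult.assoc)
      thus ?thesis using v2g by simp
    qed
    have "(x * g + v2) * (s * g + u2) = x * (g * (s * g)) + x * (g * u2) + v2 * (s * g) + v2 * u2"
      by (simp add: ring_distribs mult.assoc)
    also have "\<dots> = g + q" by (simp add: e3 e4 gu2 uv(4))
    finally show "(x * g + v2) * (s * g + u2) = p" using gpq by simp
    have "x * u2 * x = n * u2 * n"
    proof -
      have "x * u2 * x = x * (q * u2 * q) * x" using uv(1) by simp
      also have "\<dots> = (x * q) * u2 * (q * x)" by (simp add: mult.assoc)
      also have "\<dots> = n * u2 * n" by (simp add: n_def qx)
      finally show ?thesis .
    qed
    hence "x * (s * g + u2) * x = x * (s * (g * x)) + n"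
      using uv(5) by (simp add: ring_distribs mult.assoc)
    also have "\<dots> = x * g + x * q" using gx sxg by (simp add: n_def)
    also have "\<dots> = x" using gpq xp by (simp add: distrib_left[symmetric])
    finally show "x * (s * g + u2) * x = x" .
  qed
qed


lemma left_unit:
  fixes F :: "'r::ring set"
  assumes reg: "\<And>x::'r. \<exists>y. x * y * x = x" and fin: "finite F"
  shows "\<exists>e. e * e = e \<and> (\<forall>a\<in>F. e * a = a)"
  using fin
proof (induction F rule: finite_induct)
  case empty then show ?case by (intro exI[of _ 0]) simp
next
  case (insert b F)
  then obtain e where e: "e * e = e" "\<forall>a\<in>F. e * a = a" by blast
  define c where "c = b - e * b"
  obtain z where z: "c * z * c = c" using reg by blast
  define g where "g = c * z"
  have ec: "e * c = 0" unfolding c_def by (simp add: right_diff_distrib mult.assoc[symmetric] e(1))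
  have eg: "e * g = 0" unfolding g_def by (simp add: mult.assoc[symmetric] ec)
  have gc: "g * c = c" unfolding g_def using z .
  have gg: "g * g = g" unfolding g_def using z by (simp add: mult.assoc[symmetric])
  define e' where "e' = e + g - g * e"
  have e'e': "e' * e' = e'" unfolding e'_def
    by (simp add: ring_distribs e(1) eg gg mult.assoc eg[THEN ar]) (simp add: mult.assoc[symmetric] gg)
  have e'e: "e' * e = e" unfolding e'_def by (simp add: ring_distribs e(1) mult.assoc)
  have e'c: "e' * c = c" unfolding e'_def by (simp add: ring_distribs ec gc mult.assoc)
  have "e' * b = e' * (e * b + c)" unfolding c_def by simp
  also have "\<dots> = e * b + c" by (simp add: distrib_left e'c mult.assoc[symmetric] e'e)
  also have "\<dots> = b" unfolding c_def by simp
  finally have e'b: "e' * b = b" .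
  have "\<forall>a\<in>insert b F. e' * a = a"
  proof
    fix a assume "a \<in> insert b F"
    then show "e' * a = a"
    proof
      assume "a = b" then show ?thesis using e'b by simp
    next
      assume "a \<in> F"
      have ea: "e * a = a" using e(2) \<open>a \<in> F\<close> by blast
      have "e' * a = (e' * e) * a" using ea by (simp add: mult.assoc)
      then show ?thesis using e'e ea by simp
    qed
  qed
  then show ?case using e'e' by blast
qed

lemma right_unit:
  fixes F :: "'r::ring set"
  assumes reg: "\<And>x::'r. \<exists>y. x * y * x = x" and fin: "finite F"
  shows "\<exists>f. f * f = f \<and> (\<forall>a\<in>F. a * f = a)"
  using fin
proof (induction F rule: finite_induct)
  case empty then show ?case by (intro exI[of _ 0]) simp
next
  case (insert b F)
  then obtain f where f: "f * f = f" "\<forall>a\<in>F. a * f = a" by blast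
  define c where "c = b - b * f"
  obtain z where z: "c * z * c = c" using reg by blast
  define g where "g = z * c"
  have cf: "c * f = 0" unfolding c_def by (simp add: left_diff_distrib mult.assoc f(1))
  have gf: "g * f = 0" unfolding g_def by (simp add: mult.assoc cf)
  have cg: "c * g = c" unfolding g_def using z by (simp add: mult.assoc[symmetric])
  have gg: "g * g = g" unfolding g_def using z by (simp add: mult.assoc)
  define f' where "f' = f + g - f * g"
  have f'f': "f' * f' = f'" unfolding f'_def
    by (simp add: ring_distribs f(1) gf gg mult.assoc gf[THEN ar]) (simp add: mult.assoc[symmetric] f(1))
  have ff': "f * f' = f" unfolding f'_def by (simp add: ring_distribs f(1) mult.assoc[symmetric])
  have cf': "c * f' = c" unfolding f'_def by (simp add: ring_distribs cf cg mult.assoc[symmetric])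
  have "b * f' = (b * f + c) * f'" unfolding c_def by simp
  also have "\<dots> = b * f + c" by (simp add: distrib_right cf' mult.assoc ff')
  also have "\<dots> = b" unfolding c_def by simp
  finally have bf': "b * f' = b" .
  have "\<forall>a\<in>insert b F. a * f' = a"
  proof
    fix a assume "a \<in> insert b F"
    then show "a * f' = a"
    proof
      assume "a = b" then show ?thesis using bf' by simp
    next
      assume "a \<in> F"
      have af: "a * f = a" using f(2) \<open>a \<in> F\<close> by blast
      have "a * f' = a * (f * f')" using af by (simp add: mult.assoc[symmetric])
      then show ?thesis using ff' af by simp
    qed
  qed
  then show ?case using f'f' by blast
qed

theorem proposition5p5:
  fixes scale :: "'k::field \<Rightarrow> 'r::ring \<Rightarrow> 'r"
  assumes "is_algebra scale"
    and "regular_ring TYPE('r)"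
    and "locally_finite_dimensional scale"
  shows "locally_unit_regular scale"
  unfolding locally_unit_regular_def
proof (intro allI impI)
  fix F :: "'r set" assume fin: "finite F"
  have reg: "\<And>x::'r. \<exists>y. x * y * x = x" using assms(2) unfolding regular_ring_def by blast
  have vs: "vector_space scale" using assms(1) unfolding is_algebra_def by blast
  have md: "module scale" using vs by (simp add: module_iff_vector_space)
  have sc: "scale a (u * v) = u * scale a v" for a u v using assms(1) unfolding is_algebra_def by blast
  have sc2: "scale a (u * v) = scale a u * v" for a u v using assms(1) unfolding is_algebra_def by blast
  obtain e where e: "e * e = e" "\<forall>a\<in>F. e * a = a" using left_unit[OF reg fin] by blast
  obtain f where f: "f * f = f" "\<forall>a\<in>insert e F. a * f = a" using right_unit[OF reg, of "insert e F"] fin by blast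
  have ef: "e * f = e" using f(2) by simp
  define p where "p = e + f - f * e"
  have pp: "p * p = p" unfolding p_def
    by (simp add: ring_distribs e(1) f(1) ef mult.assoc ef[THEN ar] f(1)[THEN ar])
  have pa: "p * a = a" if "a \<in> F" for a
    using that e(2) unfolding p_def by (simp add: ring_distribs mult.assoc)
  have ap: "a * p = a" if "a \<in> F" for a
    using that f(2) unfolding p_def by (simp add: ring_distribs mult.assoc[symmetric])
  define S where "S = {a. p * a = a \<and> a * p = a}"
  have sub: "is_subalgebra scale S"
    unfolding is_subalgebra_def module.subspace_def[OF md]
  proof (intro conjI ballI allI)
    show "0 \<in> S" unfolding S_def by simp
  next
    fix u v assume "u \<in> S" "v \<in> S"
    then show "u + v \<in> S" unfolding S_def by (simp add: ring_distribs)
  next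
    fix c u assume "u \<in> S"
    then have pu: "p * u = u" and up: "u * p = u" unfolding S_def by simp_all
    have "p * scale c u = scale c u" using sc[of c p u] pu by simp
    moreover have "scale c u * p = scale c u" using sc2[of c u p] up by simp
    ultimately show "scale c u \<in> S" unfolding S_def by simp
  next
    fix u v assume "u \<in> S" "v \<in> S"
    then show "u * v \<in> S" unfolding S_def by (simp add: mult.assoc[symmetric]) (simp add: mult.assoc)
  qed
  have FS: "F \<subseteq> S" unfolding S_def using pa ap by blast
  have idp: "is_identity_of p S" unfolding is_identity_of_def S_def using pp by simp
  have ur: "unit_regular_on S p"
    unfolding unit_regular_on_def
  proof
    fix x assume "x \<in> S"
    then have px: "p * x = x" and xp: "x * p = x" unfolding S_def by simp_all
    obtain k s where ks: "p * s = s" "s * p = s" "x * s = s * x" "cpow p x k = cpow p x (Suc k) * s"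
      using spi[OF assms(1) assms(3) pp px xp] by blast
    obtain u v where uv: "p * u * p = u" "p * v * p = v" "u * v = p" "v * u = p" "x * u * x = x"
      using ur_corner[OF reg pp px xp ks] by blast
    have "u \<in> S" "v \<in> S" unfolding S_def
      using corner_l[OF pp uv(1)] corner_r[OF pp uv(1)] corner_l[OF pp uv(2)] corner_r[OF pp uv(2)] by simp_all
    then show "\<exists>u\<in>S. (\<exists>v\<in>S. u * v = p \<and> v * u = p) \<and> x * u * x = x" using uv by blast
  qed
  show "\<exists>S e. is_subalgebra scale S \<and> F \<subseteq> S \<and> is_identity_of e S \<and> unit_regular_on S e"
    using sub FS idp ur by blast
qed


end
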